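(* For every integer $l\ge0$ there is a constant $C_l$, depending only on $l,N,r,R$ (and the choice of $\varphi_1$), such that for all integers $k\ge0$ and all $n\in\mathbb{Z}^N$, $$\sum_{j\in\mathbb{Z},\ k\le\sqrt{j}<k+1}|(\Theta_j)_n|^2\le\frac{C_l}{(1+||n|-k|)^l}.$$
   Context: Let $N\ge2$ and $0<r<R\le\pi$. $T^N=(-\pi,\pi]^N$, and functions on $T^N$ are identified with $2\pi$-periodic functions on $\mathbb{R}^N$. Let $\varphi_1:[0,\infty)\to\mathbb{R}$ be a smooth function with $\chi_{(R-r)/3}\le\varphi_1\le\chi_{2(R-r)/3}$, where $\chi_b$ is the characteristic function of $[0,b]$. Put $\varphi_2=1-\varphi_1$, and let $\psi(x)=\varphi_2(|x|)$ for $x\in T^N$, extended $2\pi$-periodically in each variable. Let $\psi_m=(2\pi)^{-N}\int_{T^N}\psi(x)e^{-imx}dx$ be its Fourier coefficients. For $\lambda>0$, let $\theta(x,\lambda)=(2\pi)^{-N}\sum_{|m|^2<\lambda}e^{imx}$. For integers $k\ge0$, let $\theta_k(x)=\theta(x,k)\psi(x)$ and $\Theta_j=\theta_{j+1}-\theta_j$. Let $(\Theta_j)_n=(2\pi)^{-N}\int_{T^N}\Theta_j(x)e^{-inx}dx$; equivalently, $(\Theta_j)_n=(2\pi)^{-N}\sum_{m\in\mathbb{Z}^N,\,|n-m|^2=j}\psi_m$, which is $0$ if there is no such $m$. *)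

theory Defs
  imports "HOL-Analysis.Analysis"
begin

definition chi :: "real \<Rightarrow> real \<Rightarrow> real" where
  "chi b t = (if 0 \<le> t \<and> t \<le> b then 1 else 0)"

definition smooth_on_nonneg :: "(real \<Rightarrow> real) \<Rightarrow> bool" where
  "smooth_on_nonneg f \<longleftrightarrow> (\<exists>D. D 0 = f \<and>
     (\<forall>k x. 0 \<le> x \<longrightarrow> (D k has_real_derivative D (Suc k) x) (at x within {0..})))"

definition lattice :: "(real^'n) set" where
  "lattice = {m. \<forall>i. m $ i \<in> \<int>}"

text \<open>Fourier coefficient psi_m of psi(x) = phi2(|x|) = 1 - phi1(|x|) on T^N = (-pi,pi]^N.\<close>
definition psi_coeff :: "(real \<Rightarrow> real) \<Rightarrow> real^'n \<Rightarrow> complex" where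
  "psi_coeff phi1 m =
     (1 / (2 * pi) ^ CARD('n)) *
     integral (cbox (\<chi> i. - pi) (\<chi> i. pi))
       (\<lambda>x::real^'n. complex_of_real (1 - phi1 (norm x)) * exp (- \<i> * complex_of_real (m \<bullet> x)))"

definition Theta_coeff :: "(real \<Rightarrow> real) \<Rightarrow> nat \<Rightarrow> real^'n \<Rightarrow> complex" where
  "Theta_coeff phi1 j n =
     (1 / (2 * pi) ^ CARD('n)) *
     (\<Sum>m \<in> {m \<in> lattice. (norm (n - m))\<^sup>2 = real j}. psi_coeff phi1 m)"

end

theory Submission
  imports Defs "HOL-Analysis.Analysis" "HOL-Computational_Algebra.Polynomial"
begin


fun pc :: "real poly \<Rightarrow> real poly \<Rightarrow> nat \<Rightarrow> nat \<Rightarrow> real poly" where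
  "pc r t 0 i = (if i = 0 then 1 else 0)"
| "pc r t (Suc j) i = pderiv (pc r t j i) * r + (case i of 0 \<Rightarrow> 0 | Suc i' \<Rightarrow> pc r t j i' * t)"

lemma pc_zero: "j < i \<Longrightarrow> pc r t j i = 0"
proof (induction j arbitrary: i)
  case 0 then show ?case by simp
next
  case (Suc j) then show ?case by (cases i) auto
qed

lemma pc_0: "pc r t j 0 = (if j = 0 then 1 else 0)"
  by (induction j) auto

lemma chain_sum:
  assumes w: "(w has_real_derivative poly r (w x)) (at x)"
    and rho: "(\<rho> has_real_derivative poly t (w x)) (at x)"
    and D: "\<And>i. (D i has_real_derivative D (Suc i) (\<rho> x)) (at (\<rho> x))"
  shows "((\<lambda>y. \<Sum>i\<le>j. poly (pc r t j i) (w y) * D i (\<rho> y)) has_real_derivative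
          (\<Sum>i\<le>Suc j. poly (pc r t (Suc j) i) (w x) * D i (\<rho> x))) (at x)"
proof -
  have trm: "((\<lambda>y. poly (pc r t j i) (w y) * D i (\<rho> y)) has_real_derivative
      poly (pderiv (pc r t j i)) (w x) * poly r (w x) * D i (\<rho> x)
      + poly (pc r t j i) (w x) * (D (Suc i) (\<rho> x) * poly t (w x))) (at x)" for i
  proof -
    have a: "((\<lambda>y. poly (pc r t j i) (w y)) has_real_derivative poly (pderiv (pc r t j i)) (w x) * poly r (w x)) (at x)"
      using DERIV_chain2[OF poly_DERIV w] by simp
    have b: "((\<lambda>y. D i (\<rho> y)) has_real_derivative D (Suc i) (\<rho> x) * poly t (w x)) (at x)"
      using DERIV_chain2[OF D rho] by simp
    show ?thesis using DERIV_mult[OF a b] by (simp add: algebra_simps)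
  qed
  have d: "((\<lambda>y. \<Sum>i\<le>j. poly (pc r t j i) (w y) * D i (\<rho> y)) has_real_derivative
      (\<Sum>i\<le>j. poly (pderiv (pc r t j i)) (w x) * poly r (w x) * D i (\<rho> x)
      + poly (pc r t j i) (w x) * (D (Suc i) (\<rho> x) * poly t (w x)))) (at x)"
    by (rule DERIV_sum) (rule trm)
  have "(\<Sum>i\<le>Suc j. poly (pc r t (Suc j) i) (w x) * D i (\<rho> x))
     = (\<Sum>i\<le>Suc j. poly (pderiv (pc r t j i)) (w x) * poly r (w x) * D i (\<rho> x))
      + (\<Sum>i\<le>Suc j. poly (case i of 0 \<Rightarrow> 0 | Suc i' \<Rightarrow> pc r t j i' * t) (w x) * D i (\<rho> x))"
    by (simp add: sum.distrib algebra_simps)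
  also have "(\<Sum>i\<le>Suc j. poly (pderiv (pc r t j i)) (w x) * poly r (w x) * D i (\<rho> x))
      = (\<Sum>i\<le>j. poly (pderiv (pc r t j i)) (w x) * poly r (w x) * D i (\<rho> x))"
    by (simp add: pc_zero)
  also have "(\<Sum>i\<le>Suc j. poly (case i of 0 \<Rightarrow> 0 | Suc i' \<Rightarrow> pc r t j i' * t) (w x) * D i (\<rho> x))
      = (\<Sum>i\<le>j. poly (pc r t j i) (w x) * (D (Suc i) (\<rho> x) * poly t (w x)))"
    by (subst sum.atMost_Suc_shift) (simp add: algebra_simps)
  finally show ?thesis using d by (simp add: sum.distrib)
qed

fun fdiff :: "real \<Rightarrow> nat \<Rightarrow> (real \<Rightarrow> real) \<Rightarrow> real \<Rightarrow> real" where
  "fdiff h 0 f = f"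
| "fdiff h (Suc l) f = (\<lambda>u. fdiff h l f (u + h) - fdiff h l f u)"

lemma fdiff_deriv:
  assumes "\<And>u. (f has_real_derivative f' u) (at u)"
  shows "(fdiff h l f has_real_derivative fdiff h l f' u) (at u)"
proof (induction l arbitrary: u)
  case 0 then show ?case using assms by simp
next
  case (Suc l)
  have "((\<lambda>u. fdiff h l f (u + h)) has_real_derivative fdiff h l f' (u + h)) (at u)"
  proof -
    have "((\<lambda>u. u + h) has_real_derivative 1) (at u)" by (auto intro!: derivative_eq_intros)
    from DERIV_chain2[OF Suc[of "u+h"] this] show ?thesis by simp
  qed
  then show ?case using DERIV_diff[OF _ Suc[of u]] by simp
qed

lemma fdiff_bound:
  assumes "h \<ge> 0"
  shows "(\<And>k u. k < l \<Longrightarrow> (D k has_real_derivative D (Suc k) u) (at u)) \<Longrightarrow> (\<And>u. \<bar>D l u\<bar> \<le> M)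
     \<Longrightarrow> \<bar>fdiff h l (D 0) u\<bar> \<le> h ^ l * M"
proof (induction l arbitrary: D u)
  case 0 then show ?case by simp
next
  case (Suc l)
  have IH: "\<bar>fdiff h l (D (Suc 0)) v\<bar> \<le> h ^ l * M" for v
    using Suc.IH[of "\<lambda>k. D (Suc k)" v] Suc.prems by auto
  have der: "(fdiff h l (D 0) has_real_derivative fdiff h l (D 1) v) (at v)" for v
    by (rule fdiff_deriv) (use Suc.prems(1)[of 0] in auto)
  show ?case
  proof (cases "h = 0")
    case True then show ?thesis by simp
  next
    case False
    with assms have "u < u + h" by simp
    from MVT2[OF this, of "fdiff h l (D 0)" "fdiff h l (D 1)"] der obtain z where
      z: "fdiff h l (D 0) (u + h) - fdiff h l (D 0) u = (u + h - u) * fdiff h l (D 1) z" by blast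
    have "\<bar>fdiff h (Suc l) (D 0) u\<bar> = h * \<bar>fdiff h l (D 1) z\<bar>" using z assms by (simp add: abs_mult)
    also have "\<dots> \<le> h * (h ^ l * M)" using IH[of z] assms by (intro mult_left_mono) auto
    finally show ?thesis by (simp add: algebra_simps)
  qed
qed


locale phis =
  fixes phi1 :: "real \<Rightarrow> real" and r R :: real and D :: "nat \<Rightarrow> real \<Rightarrow> real"
  assumes rR: "0 < r" "r < R" "R \<le> pi"
    and D0: "D 0 = phi1"
    and Dd: "\<And>k x. 0 \<le> x \<Longrightarrow> (D k has_real_derivative D (Suc k) x) (at x within {0..})"
    and lower: "\<And>t. 0 \<le> t \<Longrightarrow> chi ((R - r) / 3) t \<le> phi1 t"
    and upper: "\<And>t. 0 \<le> t \<Longrightarrow> phi1 t \<le> chi (2 * (R - r) / 3) t"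
begin

definition "aa = 2 * (R - r) / 3"
definition "bb = (R - r) / 3"

lemma ab: "0 < bb" "bb < aa" "aa < pi"
  using rR unfolding aa_def bb_def by auto

lemma phi1_one: "0 \<le> t \<Longrightarrow> t \<le> bb \<Longrightarrow> phi1 t = 1"
  using lower[of t] upper[of t] ab unfolding chi_def aa_def bb_def by (auto split: if_splits)

lemma phi1_zero: "aa < t \<Longrightarrow> phi1 t = 0"
  using lower[of t] upper[of t] ab unfolding chi_def aa_def bb_def by (auto split: if_splits)

lemma phi1_range: "0 \<le> t \<Longrightarrow> 0 \<le> phi1 t \<and> phi1 t \<le> 1"
  using lower[of t] upper[of t] unfolding chi_def by (auto split: if_splits)

lemma Dat: "0 < x \<Longrightarrow> (D k has_real_derivative D (Suc k) x) (at x)"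
proof -
  assume x: "0 < x"
  have "(D k has_real_derivative D (Suc k) x) (at x within {0<..})"
    by (rule has_field_derivative_subset[OF Dd]) (use x in auto)
  then show ?thesis using at_within_open[of x "{0<..}"] x by simp
qed

lemma D_small: "0 < t \<Longrightarrow> t < bb \<Longrightarrow> D k t = (if k = 0 then 1 else 0)"
proof (induction k arbitrary: t)
  case 0 then show ?case using phi1_one D0 by simp
next
  case (Suc k)
  have "((\<lambda>_. if k = 0 then 1 else 0) has_real_derivative 0) (at t)" by simp
  then have "(D k has_real_derivative 0) (at t)"
    by (rule has_field_derivative_transform_within_open[where S="{0<..<bb}"]) (use Suc in auto)
  with Dat[of t k] Suc.prems show ?case using DERIV_unique by auto
qed

lemma D_large: "aa < t \<Longrightarrow> D k t = 0"
proof (induction k arbitrary: t)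
  case 0 then show ?case using phi1_zero D0 by simp
next
  case (Suc k)
  have "((\<lambda>_. 0) has_real_derivative 0) (at t)" by simp
  then have "(D k has_real_derivative 0) (at t)"
    by (rule has_field_derivative_transform_within_open[where S="{aa<..}"]) (use Suc in auto)
  with Dat[of t k] Suc.prems ab show ?case using DERIV_unique by auto
qed

definition "rp = [:0, 0, 0, -1/2:]"
definition "tp = [:0, 1/2:]"

definition S :: "nat \<Rightarrow> real \<Rightarrow> real" where
  "S j s = (\<Sum>i\<le>j. poly (pc rp tp j i) (inverse (sqrt s)) * D i (sqrt s))"

definition Phi :: "nat \<Rightarrow> real \<Rightarrow> real" where
  "Phi j s = (if s < bb^2 then (if j = 0 then 1 else 0) else S j s)"

lemma S_deriv: "0 < s \<Longrightarrow> (S j has_real_derivative S (Suc j) s) (at s)"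
proof -
  assume s: "0 < s"
  have w: "((\<lambda>s. inverse (sqrt s)) has_real_derivative poly rp (inverse (sqrt s))) (at s)"
  proof -
    have "((\<lambda>s. inverse (sqrt s)) has_real_derivative - (inverse (sqrt s) ^ 2 * inverse (2 * sqrt s))) (at s)"
      using s by (auto intro!: derivative_eq_intros simp: power2_eq_square)
    moreover have "- (inverse (sqrt s) ^ 2 * inverse (2 * sqrt s)) = poly rp (inverse (sqrt s))"
      unfolding rp_def using s by (simp add: field_simps power_inverse)
    ultimately show ?thesis by simp
  qed
  have rho: "(sqrt has_real_derivative poly tp (inverse (sqrt s))) (at s)"
  proof -
    have "(sqrt has_real_derivative inverse (sqrt s) / 2) (at s)"
      using s DERIV_real_sqrt[of s] by (simp add: field_simps)
    then show ?thesis unfolding tp_def by (simp add: field_simps)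
  qed
  have Dx: "(D i has_real_derivative D (Suc i) (sqrt s)) (at (sqrt s))" for i
    using Dat[of "sqrt s"] s by simp
  show ?thesis unfolding S_def[abs_def]
    using chain_sum[of "\<lambda>s. inverse (sqrt s)" rp s sqrt tp D j, OF w rho Dx] by simp
qed

lemma S_small: "bb^2/4 < s \<Longrightarrow> s < bb^2 \<Longrightarrow> S j s = (if j = 0 then 1 else 0)"
proof -
  assume s: "bb^2/4 < s" "s < bb^2"
  have "0 < bb^2" using ab by simp
  then have s0: "0 < s" using s by linarith
  have "sqrt s < bb" using s ab real_sqrt_less_iff[of s "bb^2"] by simp
  then have Dv: "D i (sqrt s) = (if i = 0 then 1 else 0)" for i using D_small s0 by simp
  have "S j s = (\<Sum>i\<le>j. if i = 0 then poly (pc rp tp j 0) (inverse (sqrt s)) else 0)"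
    unfolding S_def by (intro sum.cong) (auto simp: Dv)
  also have "\<dots> = poly (pc rp tp j 0) (inverse (sqrt s))" by (simp add: sum.delta)
  finally show ?thesis by (simp add: pc_0)
qed

lemma Phi_deriv: "(Phi j has_real_derivative Phi (Suc j) s) (at s)"
proof (cases "s < bb^2")
  case True
  have "((\<lambda>_. if j = 0 then 1 else 0) has_real_derivative 0) (at s)" by simp
  then have "(Phi j has_real_derivative 0) (at s)"
    by (rule has_field_derivative_transform_within_open[where S="{..<bb^2}"]) (use True in \<open>auto simp: Phi_def\<close>)
  then show ?thesis using True by (simp add: Phi_def)
next
  case False
  have bpos: "0 < bb^2" using ab by simp
  then have s0: "0 < s" using False by linarith
  have "(Phi j has_real_derivative S (Suc j) s) (at s)"
  proof (rule has_field_derivative_transform_within_open[OF S_deriv[OF s0], where S="{bb^2/4<..}"])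
    have "bb^2/4 < bb^2" using bpos by simp
    then show "s \<in> {bb^2/4<..}" unfolding greaterThan_iff using False by linarith
    show "x \<in> {bb^2/4<..} \<Longrightarrow> S j x = Phi j x" for x by (auto simp: Phi_def S_small)
  qed simp
  then show ?thesis using False by (simp add: Phi_def)
qed

lemma Phi_large: "aa^2 < s \<Longrightarrow> Phi j s = 0"
proof -
  assume s: "aa^2 < s"
  have "aa < sqrt s" using s ab real_less_rsqrt by auto
  then have "S j s = 0" unfolding S_def by (simp add: D_large)
  moreover have "bb^2 < aa^2" using ab by (intro power_strict_mono) auto
  then have "\<not> s < bb^2" using s by linarith
  ultimately show ?thesis by (simp add: Phi_def)
qed

lemma Phi_0: "0 \<le> s \<Longrightarrow> Phi 0 s = phi1 (sqrt s)"
proof -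
  assume s: "0 \<le> s"
  show ?thesis
  proof (cases "s < bb^2")
    case True
    then have "sqrt s \<le> bb" using ab real_sqrt_less_iff[of s "bb^2"] by simp
    then show ?thesis using True s phi1_one by (simp add: Phi_def)
  qed (simp add: Phi_def S_def D0)
qed

lemma Phi_bounded: "\<exists>M. \<forall>s. \<bar>Phi j s\<bar> \<le> M"
proof -
  have "continuous_on {0..aa^2} (Phi j)"
    using Phi_deriv DERIV_isCont continuous_at_imp_continuous_on by blast
  then obtain B where B: "\<And>x. x \<in> {0..aa^2} \<Longrightarrow> norm (Phi j x) \<le> B"
    using continuous_on_compact_bound[of "{0..aa^2}" "Phi j"] by auto
  have "\<bar>Phi j s\<bar> \<le> max 1 B" for s
  proof (cases "s < 0")
    case True
    moreover have "0 \<le> bb^2" by simp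
    ultimately have "s < bb^2" by linarith
    then show ?thesis by (simp add: Phi_def le_max_iff_disj)
  next
    case False
    then show ?thesis using B[of s] Phi_large[of s] by (cases "s \<le> aa^2") auto
  qed
  then show ?thesis by blast
qed

end


lemma fdiff_shift: "fdiff h l (\<lambda>u. f (u + t)) v = fdiff h l f (v + t)"
  by (induction l arbitrary: v) (auto simp: add_ac)

lemma norm_axis_sq:
  fixes x :: "real^'n"
  shows "(norm (x + u *\<^sub>R axis i 1))^2 = (u + x$i)^2 + ((norm x)^2 - (x$i)^2)"
proof -
  have ax: "axis i (1::real) \<bullet> axis i 1 = 1" by (simp only: inner_axis_axis) simp
  have h1: "axis i (1::real) \<bullet> x = x$i" by (simp add: inner_axis')
  have h2: "x \<bullet> axis i (1::real) = x$i" by (simp add: inner_axis)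
  show ?thesis unfolding power2_norm_eq_inner
    by (simp add: inner_add_left inner_add_right ax h1 h2 algebra_simps power2_eq_square)
qed

context phis
begin

definition E :: "real \<Rightarrow> nat \<Rightarrow> real \<Rightarrow> real" where
  "E c l u = (\<Sum>j\<le>l. poly (pc [:1:] [:0,2:] l j) u * Phi j (u^2 + c))"

lemma E_deriv: "(E c l has_real_derivative E c (Suc l) u) (at u)"
proof -
  have w: "((\<lambda>u. u) has_real_derivative poly [:1:] u) (at u)" by simp
  have rho: "((\<lambda>u. u^2 + c) has_real_derivative poly [:0,2:] u) (at u)"
    by (auto intro!: derivative_eq_intros)
  show ?thesis unfolding E_def[abs_def]
    using chain_sum[of "\<lambda>u. u" "[:1:]" u "\<lambda>u. u^2 + c" "[:0,2:]" Phi l, OF w rho Phi_deriv] by simp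
qed

lemma E_0: "E c 0 = (\<lambda>u. Phi 0 (u^2 + c))"
  by (simp add: E_def[abs_def])

lemma E_bound: "\<exists>B. \<forall>c u. 0 \<le> c \<longrightarrow> \<bar>E c l u\<bar> \<le> B"
proof -
  have "\<forall>j. \<exists>M. \<forall>s. \<bar>Phi j s\<bar> \<le> M" using Phi_bounded by blast
  then obtain Mf where Mf: "\<And>j s. \<bar>Phi j s\<bar> \<le> Mf j" by metis
  have "\<forall>j. \<exists>B. \<forall>u\<in>{-aa..aa}. \<bar>poly (pc [:1:] [:0,2:] l j) u\<bar> \<le> B"
  proof
    fix j
    have "continuous_on {-aa..aa} (poly (pc [:1:] [:0,2:] l j))" by (auto intro: continuous_intros)
    then obtain B where "\<And>x. x \<in> {-aa..aa} \<Longrightarrow> norm (poly (pc [:1:] [:0,2:] l j) x) \<le> B"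
      using continuous_on_compact_bound[of "{-aa..aa}"] by blast
    then show "\<exists>B. \<forall>u\<in>{-aa..aa}. \<bar>poly (pc [:1:] [:0,2:] l j) u\<bar> \<le> B" by (auto intro!: exI[of _ B])
  qed
  then obtain Pf where Pf: "\<And>j u. u \<in> {-aa..aa} \<Longrightarrow> \<bar>poly (pc [:1:] [:0,2:] l j) u\<bar> \<le> Pf j" by metis
  have Mf0: "0 \<le> Mf j" for j using Mf[of j 0] by linarith
  have Pf0: "0 \<le> Pf j" for j using Pf[of 0 j] ab by force
  have "\<bar>E c l u\<bar> \<le> (\<Sum>j\<le>l. Pf j * Mf j)" if c: "0 \<le> c" for c u
  proof (cases "\<bar>u\<bar> \<le> aa")
    case True
    then have uu: "u \<in> {-aa..aa}" by auto
    have "\<bar>E c l u\<bar> \<le> (\<Sum>j\<le>l. \<bar>poly (pc [:1:] [:0,2:] l j) u * Phi j (u^2 + c)\<bar>)"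
      unfolding E_def by (rule sum_abs)
    also have "\<dots> \<le> (\<Sum>j\<le>l. Pf j * Mf j)"
      by (intro sum_mono) (use uu Pf Mf Pf0 in \<open>auto simp: abs_mult intro!: mult_mono\<close>)
    finally show ?thesis .
  next
    case False
    then have "aa^2 < u^2" using ab by (metis abs_le_square_iff abs_of_pos linorder_not_le less_trans pi_gt_zero abs_le_iff power2_abs abs_ge_self not_le order_less_le_trans zero_less_abs_iff)
    then have "aa^2 < u^2 + c" using c by linarith
    then have "E c l u = 0" by (simp add: E_def Phi_large)
    then show ?thesis using Pf0 Mf0 by (simp add: sum_nonneg)
  qed
  then show ?thesis by blast
qed

lemma fd_bound: "\<exists>B. \<forall>c u h. 0 \<le> c \<longrightarrow> 0 \<le> h \<longrightarrow> \<bar>fdiff h l (\<lambda>u. Phi 0 (u^2 + c)) u\<bar> \<le> h^l * B"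
proof -
  obtain B where B: "\<And>c u. 0 \<le> c \<Longrightarrow> \<bar>E c l u\<bar> \<le> B" using E_bound by blast
  have "\<bar>fdiff h l (E c 0) u\<bar> \<le> h^l * B" if "0 \<le> c" "0 \<le> h" for c u h
    by (rule fdiff_bound) (use that E_deriv B in auto)
  then show ?thesis unfolding E_0 by blast
qed

lemma gd_bound: "\<exists>B. \<forall>(x::real^'n) i h. 0 \<le> h \<longrightarrow>
    \<bar>fdiff h l (\<lambda>u. phi1 (norm (x + u *\<^sub>R axis i 1))) 0\<bar> \<le> h^l * B"
proof -
  obtain B where B: "\<And>c u h. 0 \<le> c \<Longrightarrow> 0 \<le> h \<Longrightarrow> \<bar>fdiff h l (\<lambda>u. Phi 0 (u^2 + c)) u\<bar> \<le> h^l * B"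
    using fd_bound by blast
  have "\<bar>fdiff h l (\<lambda>u. phi1 (norm (x + u *\<^sub>R axis i 1))) 0\<bar> \<le> h^l * B" if h: "0 \<le> h" for x :: "real^'n" and i h
  proof -
    define c where "c = (norm x)^2 - (x$i)^2"
    have c0: "0 \<le> c" unfolding c_def using component_le_norm_cart[of x i]
      by (simp add: abs_le_square_iff[symmetric])
    have "(\<lambda>u. phi1 (norm (x + u *\<^sub>R axis i 1))) = (\<lambda>u. Phi 0 ((u + x$i)^2 + c))"
    proof
      fix u
      have "Phi 0 ((u + x$i)^2 + c) = phi1 (sqrt ((norm (x + u *\<^sub>R axis i 1))^2))"
        unfolding c_def norm_axis_sq by (rule Phi_0) (simp add: norm_axis_sq[symmetric])
      then show "phi1 (norm (x + u *\<^sub>R axis i 1)) = Phi 0 ((u + x$i)^2 + c)" by simp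
    qed
    then have "fdiff h l (\<lambda>u. phi1 (norm (x + u *\<^sub>R axis i 1))) 0 = fdiff h l (\<lambda>u. Phi 0 (u^2 + c)) (x$i)"
      using fdiff_shift[of h l "\<lambda>u. Phi 0 (u^2 + c)" "x$i" 0] by simp
    then show ?thesis using B[OF c0 h] by simp
  qed
  then show ?thesis by blast
qed

end


lemma box_split_le:
  fixes a b :: "real^'n"
  shows "cbox a b \<inter> {x. x \<bullet> axis i 1 \<le> c} = cbox a (\<chi> j. if j = i then min (b$i) c else b$j)"
  using interval_split_cart(1)[where a=a and b=b and k=i and c=c] by (simp add: inner_axis interval_cbox_cart)

lemma box_split_ge:
  fixes a b :: "real^'n"
  shows "cbox a b \<inter> {x. c \<le> x \<bullet> axis i 1} = cbox (\<chi> j. if j = i then max (a$i) c else a$j) b"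
  using interval_split_cart(2)[where a=a and b=b and k=i and c=c] by (simp add: inner_axis interval_cbox_cart)

lemma axis_basis: "axis i (1::real) \<in> (Basis :: (real^'n) set)"
  by (auto simp: Basis_vec_def)

lemma periodic_shift:
  fixes f :: "real^'n \<Rightarrow> complex"
  assumes cont: "continuous_on UNIV f"
    and per: "\<And>x. f (x + (2 * pi) *\<^sub>R axis i 1) = f x"
    and s: "0 \<le> s" "s \<le> 2 * pi"
  shows "integral (cbox (\<chi> j. - pi) (\<chi> j. pi)) (\<lambda>x. f (x + s *\<^sub>R axis i 1))
       = integral (cbox (\<chi> j. - pi) (\<chi> j. pi)) f"
proof -
  define lo :: "real^'n" where "lo = (\<chi> j. - pi)"
  define hi :: "real^'n" where "hi = (\<chi> j. pi)"
  define e :: "real^'n" where "e = axis i 1"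
  have eB: "e \<in> Basis" unfolding e_def by (rule axis_basis)
  have int: "f integrable_on cbox u v" for u v
    using cont by (intro integrable_continuous) (auto intro: continuous_on_subset)
  have B1: "integral (cbox lo hi) (\<lambda>x. f (x + s *\<^sub>R e)) = integral (cbox (lo + s *\<^sub>R e) (hi + s *\<^sub>R e)) f"
  proof -
    have "((f \<circ> (+) (s *\<^sub>R e)) has_integral integral (cbox (lo + s *\<^sub>R e) (hi + s *\<^sub>R e)) f) (cbox lo hi)"
      using has_integral_shift_cbox_iff int by (metis has_integral_integral)
    then show ?thesis by (simp add: o_def add.commute integral_unique)
  qed
  have B2: "integral (cbox (lo + s *\<^sub>R e) (hi + s *\<^sub>R e)) f
     = integral (cbox (lo + s *\<^sub>R e) hi) f + integral (cbox (lo + (2*pi) *\<^sub>R e) (hi + s *\<^sub>R e)) f"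
  proof -
    have e1: "cbox (lo + s *\<^sub>R e) (hi + s *\<^sub>R e) \<inter> {x. x \<bullet> e \<le> pi} = cbox (lo + s *\<^sub>R e) hi"
      unfolding e_def box_split_le using s
      by (intro arg_cong2[where f=cbox] refl) (auto simp: vec_eq_iff hi_def axis_def)
    have e2: "cbox (lo + s *\<^sub>R e) (hi + s *\<^sub>R e) \<inter> {x. pi \<le> x \<bullet> e} = cbox (lo + (2*pi) *\<^sub>R e) (hi + s *\<^sub>R e)"
      unfolding e_def box_split_ge using s
      by (intro arg_cong2[where f=cbox] refl) (auto simp: vec_eq_iff lo_def axis_def)
    show ?thesis using integral_split[OF int eB, of _ _ pi] e1 e2 by simp
  qed
  have B3: "integral (cbox (lo + (2*pi) *\<^sub>R e) (hi + s *\<^sub>R e)) f = integral (cbox lo (hi + (s - 2*pi) *\<^sub>R e)) f"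
  proof -
    have "((f \<circ> (+) ((2*pi) *\<^sub>R e)) has_integral integral (cbox (lo + (2*pi) *\<^sub>R e) (hi + (s - 2*pi) *\<^sub>R e + (2*pi) *\<^sub>R e)) f) (cbox lo (hi + (s - 2*pi) *\<^sub>R e))"
      using has_integral_shift_cbox_iff int by (metis has_integral_integral)
    moreover have "hi + (s - 2*pi) *\<^sub>R e + (2*pi) *\<^sub>R e = hi + s *\<^sub>R e" by (simp add: algebra_simps)
    moreover have "f \<circ> (+) ((2*pi) *\<^sub>R e) = f" using per unfolding e_def by (auto simp: add.commute)
    ultimately show ?thesis by (simp add: integral_unique)
  qed
  have B4: "integral (cbox lo hi) f = integral (cbox lo (hi + (s - 2*pi) *\<^sub>R e)) f + integral (cbox (lo + s *\<^sub>R e) hi) f"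
  proof -
    have e1: "cbox lo hi \<inter> {x. x \<bullet> e \<le> - pi + s} = cbox lo (hi + (s - 2*pi) *\<^sub>R e)"
      unfolding e_def box_split_le using s
      by (intro arg_cong2[where f=cbox] refl) (auto simp: vec_eq_iff hi_def axis_def)
    have e2: "cbox lo hi \<inter> {x. - pi + s \<le> x \<bullet> e} = cbox (lo + s *\<^sub>R e) hi"
      unfolding e_def box_split_ge using s
      by (intro arg_cong2[where f=cbox] refl) (auto simp: vec_eq_iff lo_def axis_def)
    show ?thesis using integral_split[OF int eB, of _ _ "- pi + s"] e1 e2 by simp
  qed
  show ?thesis using B1 B2 B3 B4 unfolding lo_def hi_def e_def by simp
qed


definition Em :: "real^'n \<Rightarrow> real^'n \<Rightarrow> complex" where
  "Em m x = exp (- \<i> * complex_of_real (m \<bullet> x))"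

lemma Em_cont: "continuous_on UNIV (Em m)"
  unfolding Em_def by (intro continuous_intros)

lemma Em_shift: "Em m (x + v) = Em m x * exp (- \<i> * complex_of_real (m \<bullet> v))"
  unfolding Em_def by (simp add: inner_add_right distrib_left mult_exp_exp)

lemma norm_Em [simp]: "norm (Em m x) = 1"
proof -
  have "Em m x = exp (\<i> * complex_of_real (- (m \<bullet> x)))" unfolding Em_def by simp
  then show ?thesis by simp
qed

definition supp_box :: "real \<Rightarrow> (real^'n \<Rightarrow> real) \<Rightarrow> bool" where
  "supp_box K q \<longleftrightarrow> (\<forall>x. x \<notin> cbox (\<chi> j. - K) (\<chi> j. K) \<longrightarrow> q x = 0)"

lemma supp_box_mono: "supp_box K q \<Longrightarrow> K \<le> K' \<Longrightarrow> supp_box K' q"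
proof -
  assume a: "supp_box K q" "K \<le> K'"
  have "cbox (\<chi> j. - K) (\<chi> j. K) \<subseteq> cbox (\<chi> j. - K') ((\<chi> j. K') :: real^'n)"
  proof
    fix x :: "real^'n" assume "x \<in> cbox (\<chi> j. - K) (\<chi> j. K)"
    then have "\<And>i. - K \<le> x$i \<and> x$i \<le> K" unfolding mem_box_cart by simp
    then show "x \<in> cbox (\<chi> j. - K') (\<chi> j. K')" unfolding mem_box_cart using a(2)
      by (metis vec_lambda_beta neg_le_iff_le order_trans)
  qed
  then show ?thesis using a(1) unfolding supp_box_def by blast
qed

lemma int_UNIV:
  fixes q :: "real^'n \<Rightarrow> real"
  assumes "continuous_on UNIV q" "supp_box K q"
  shows "((\<lambda>x. of_real (q x) * Em m x) has_integral
           integral (cbox (\<chi> j. - K) (\<chi> j. K)) (\<lambda>x. of_real (q x) * Em m x)) UNIV"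
proof (rule has_integral_on_superset)
  have "continuous_on UNIV (\<lambda>x. of_real (q x) * Em m x)"
    using assms(1) Em_cont by (intro continuous_intros) auto
  then show "((\<lambda>x. of_real (q x) * Em m x) has_integral
           integral (cbox (\<chi> j. - K) (\<chi> j. K)) (\<lambda>x. of_real (q x) * Em m x)) (cbox (\<chi> j. - K) (\<chi> j. K))"
    by (intro integrable_integral integrable_continuous) (auto intro: continuous_on_subset)
  show "x \<notin> cbox (\<chi> j. - K) (\<chi> j. K) \<Longrightarrow> of_real (q x) * Em m x = 0" for x
    using assms(2) unfolding supp_box_def by simp
qed auto

lemma shift_int:
  fixes q :: "real^'n \<Rightarrow> real"
  assumes cont: "continuous_on UNIV q" and supp: "supp_box K q"
  shows "((\<lambda>x. of_real (q (x + v)) * Em m x) has_integral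
          (exp (\<i> * complex_of_real (m \<bullet> v)) * integral UNIV (\<lambda>x. of_real (q x) * Em m x))) UNIV"
proof -
  define a :: "real^'n" where "a = (\<chi> j. - K)"
  define b :: "real^'n" where "b = (\<chi> j. K)"
  define c where "c = exp (\<i> * complex_of_real (m \<bullet> v))"
  define F where "F y = of_real (q y) * Em m (y - v)" for y
  have Fe: "F y = c * (of_real (q y) * Em m y)" for y
  proof -
    have "Em m (y - v) = Em m y * c"
      using Em_shift[of m y "- v"] unfolding c_def by (simp add: inner_minus_right)
    then show ?thesis unfolding F_def by simp
  qed
  have hI: "((\<lambda>x. of_real (q x) * Em m x) has_integral integral (cbox a b) (\<lambda>x. of_real (q x) * Em m x)) UNIV"
    using int_UNIV[OF cont supp] unfolding a_def b_def .
  have iU: "integral UNIV (\<lambda>x. of_real (q x) * Em m x) = integral (cbox a b) (\<lambda>x. of_real (q x) * Em m x)"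
    using hI by (rule integral_unique)
  have "((\<lambda>x. of_real (q x) * Em m x) has_integral integral (cbox a b) (\<lambda>x. of_real (q x) * Em m x)) (cbox a b)"
  proof -
    have "continuous_on UNIV (\<lambda>x. of_real (q x) * Em m x)"
      using cont Em_cont by (intro continuous_intros) auto
    then show ?thesis
      by (intro integrable_integral integrable_continuous) (auto intro: continuous_on_subset)
  qed
  then have "(F has_integral c * integral (cbox a b) (\<lambda>x. of_real (q x) * Em m x)) (cbox a b)"
    unfolding Fe by (rule has_integral_mult_right)
  then have "((F \<circ> (+) v) has_integral c * integral (cbox a b) (\<lambda>x. of_real (q x) * Em m x)) (cbox (a - v) (b - v))"
    using has_integral_shift_cbox_iff[of F v _ "a - v" "b - v"] by simp
  moreover have "F \<circ> (+) v = (\<lambda>x. of_real (q (x + v)) * Em m x)"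
    unfolding F_def by (auto simp: add.commute)
  ultimately have h2: "((\<lambda>x. of_real (q (x + v)) * Em m x) has_integral c * integral (cbox a b) (\<lambda>x. of_real (q x) * Em m x)) (cbox (a - v) (b - v))"
    by simp
  have "((\<lambda>x. of_real (q (x + v)) * Em m x) has_integral c * integral (cbox a b) (\<lambda>x. of_real (q x) * Em m x)) UNIV"
  proof (rule has_integral_on_superset[OF h2])
    fix x assume xn: "x \<notin> cbox (a - v) (b - v)"
    have "x + v \<notin> cbox (\<chi> j. - K) (\<chi> j. K)"
    proof
      assume "x + v \<in> cbox (\<chi> j. - K) (\<chi> j. K)"
      then have "\<And>j. - K \<le> x$j + v$j \<and> x$j + v$j \<le> K" unfolding mem_box_cart by simp
      then have "x \<in> cbox (a - v) (b - v)" unfolding a_def b_def mem_box_cart by (auto simp: algebra_simps)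
      then show False using xn by simp
    qed
    then show "of_real (q (x + v)) * Em m x = 0" using supp unfolding supp_box_def by simp
  qed auto
  then show ?thesis unfolding iU c_def .
qed

fun vdiff :: "real^'n \<Rightarrow> nat \<Rightarrow> (real^'n \<Rightarrow> real) \<Rightarrow> real^'n \<Rightarrow> real" where
  "vdiff v 0 q = q"
| "vdiff v (Suc l) q = (\<lambda>x. vdiff v l q (x + v) - vdiff v l q x)"

lemma vdiff_cont: "continuous_on UNIV q \<Longrightarrow> continuous_on UNIV (vdiff v l q)"
proof (induction l)
  case 0 then show ?case by simp
next
  case (Suc l)
  have "continuous_on UNIV (\<lambda>x. vdiff v l q (x + v))"
    by (rule continuous_on_compose2[OF Suc.IH[OF Suc.prems], of UNIV "\<lambda>x. x + v"]) (auto intro: continuous_intros)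
  then show ?case using Suc by (auto intro!: continuous_intros)
qed

lemma vdiff_supp:
  fixes q :: "real^'n \<Rightarrow> real"
  assumes "supp_box K q" "0 \<le> h"
  shows "supp_box (K + real l * h) (vdiff (h *\<^sub>R axis i 1) l q)"
proof (induction l)
  case 0 then show ?case using assms by simp
next
  case (Suc l)
  show ?case unfolding supp_box_def
  proof (intro allI impI)
    fix x :: "real^'n"
    assume x: "x \<notin> cbox (\<chi> j. - (K + real (Suc l) * h)) (\<chi> j. K + real (Suc l) * h)"
    then obtain j where j: "x$j < - (K + real (Suc l) * h) \<or> x$j > K + real (Suc l) * h"
      unfolding mem_box_cart by (auto simp: not_le)
    have eq: "real (Suc l) * h = real l * h + h" by (simp add: algebra_simps)
    have "x \<notin> cbox (\<chi> j. - (K + real l * h)) (\<chi> j. K + real l * h)"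
    proof
      assume "x \<in> cbox (\<chi> j. - (K + real l * h)) (\<chi> j. K + real l * h)"
      then have "- (K + real l * h) \<le> x$j \<and> x$j \<le> K + real l * h" unfolding mem_box_cart by simp
      then show False using j eq assms(2) by linarith
    qed
    moreover have "x + h *\<^sub>R axis i 1 \<notin> cbox (\<chi> j. - (K + real l * h)) (\<chi> j. K + real l * h)"
    proof
      assume A: "x + h *\<^sub>R axis i 1 \<in> cbox (\<chi> j. - (K + real l * h)) (\<chi> j. K + real l * h)"
      have b: "- (K + real l * h) \<le> (x + h *\<^sub>R axis i 1)$j \<and> (x + h *\<^sub>R axis i 1)$j \<le> K + real l * h"
        using A[unfolded mem_box_cart, rule_format, of j] by simp
      have c: "(x + h *\<^sub>R axis i 1)$j = x$j + (if j = i then h else 0)" by (simp add: axis_def)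
      show False
      proof (cases "j = i")
        case True
        then have "(x + h *\<^sub>R axis i 1)$j = x$j + h" using c by simp
        then show False using b j eq assms(2) by linarith
      next
        case False
        then have "(x + h *\<^sub>R axis i 1)$j = x$j" using c by simp
        then show False using b j eq assms(2) by linarith
      qed
    qed
    ultimately have "vdiff (h *\<^sub>R axis i 1) l q x = 0" "vdiff (h *\<^sub>R axis i 1) l q (x + h *\<^sub>R axis i 1) = 0"
      using Suc.IH unfolding supp_box_def by blast+
    then show "vdiff (h *\<^sub>R axis i 1) (Suc l) q x = 0" by simp
  qed
qed


lemma vdiff_fdiff: "vdiff (h *\<^sub>R e) l q x = fdiff h l (\<lambda>u. q (x + u *\<^sub>R e)) 0"
proof (induction l arbitrary: x)
  case 0 then show ?case by simp
next
  case (Suc l)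
  have "fdiff h l (\<lambda>u. q (x + u *\<^sub>R e)) (0 + h) = fdiff h l (\<lambda>u. q (x + (u + h) *\<^sub>R e)) 0"
    using fdiff_shift[of h l "\<lambda>u. q (x + u *\<^sub>R e)" h 0] by simp
  also have "(\<lambda>u. q (x + (u + h) *\<^sub>R e)) = (\<lambda>u. q (x + h *\<^sub>R e + u *\<^sub>R e))"
    by (auto simp: algebra_simps)
  finally show ?case using Suc by simp
qed

lemma vdiff_T:
  fixes q :: "real^'n \<Rightarrow> real"
  assumes cont: "continuous_on UNIV q" and supp: "supp_box K q" and h: "0 \<le> h"
  shows "integral UNIV (\<lambda>x. of_real (vdiff (h *\<^sub>R axis i 1) l q x) * Em m x)
       = (exp (\<i> * complex_of_real (h * m$i)) - 1) ^ l * integral UNIV (\<lambda>x. of_real (q x) * Em m x)"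
proof (induction l)
  case 0 then show ?case by simp
next
  case (Suc l)
  let ?A = "vdiff (h *\<^sub>R axis i 1) l q"
  have c: "continuous_on UNIV ?A" by (rule vdiff_cont[OF cont])
  have s: "supp_box (K + real l * h) ?A" by (rule vdiff_supp[OF supp h])
  have i1: "((\<lambda>x. of_real (?A (x + h *\<^sub>R axis i 1)) * Em m x) has_integral
     (exp (\<i> * complex_of_real (m \<bullet> (h *\<^sub>R axis i 1))) * integral UNIV (\<lambda>x. of_real (?A x) * Em m x))) UNIV"
    by (rule shift_int[OF c s])
  have i2: "((\<lambda>x. of_real (?A x) * Em m x) has_integral integral UNIV (\<lambda>x. of_real (?A x) * Em m x)) UNIV"
    by (rule integrable_integral[OF has_integral_integrable[OF int_UNIV[OF c s]]])
  have "((\<lambda>x. of_real (vdiff (h *\<^sub>R axis i 1) (Suc l) q x) * Em m x) has_integral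
      (exp (\<i> * complex_of_real (m \<bullet> (h *\<^sub>R axis i 1))) * integral UNIV (\<lambda>x. of_real (?A x) * Em m x)
        - integral UNIV (\<lambda>x. of_real (?A x) * Em m x))) UNIV"
    using has_integral_diff[OF i1 i2] by (simp add: left_diff_distrib)
  then have "integral UNIV (\<lambda>x. of_real (vdiff (h *\<^sub>R axis i 1) (Suc l) q x) * Em m x)
     = exp (\<i> * complex_of_real (m \<bullet> (h *\<^sub>R axis i 1))) * integral UNIV (\<lambda>x. of_real (?A x) * Em m x)
        - integral UNIV (\<lambda>x. of_real (?A x) * Em m x)"
    by (rule integral_unique)
  also have "m \<bullet> (h *\<^sub>R axis i 1) = h * m$i" by (simp add: inner_axis)
  finally have "integral UNIV (\<lambda>x. of_real (vdiff (h *\<^sub>R axis i 1) (Suc l) q x) * Em m x)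
     = (exp (\<i> * complex_of_real (h * m$i)) - 1) * integral UNIV (\<lambda>x. of_real (?A x) * Em m x)"
    by (simp add: algebra_simps)
  then show ?case using Suc.IH by simp
qed


lemma cis_pm_pi: "x \<noteq> 0 \<Longrightarrow> cis ((pi / \<bar>x\<bar>) * x) = -1"
proof (cases "x > 0")
  case True then show ?thesis by simp
next
  case False
  assume "x \<noteq> 0"
  with False have "(pi / \<bar>x\<bar>) * x = - pi" by simp
  then show ?thesis by (simp add: complex_eq_iff)
qed

lemma int_abs_ge1: "(y::real) \<in> \<int> \<Longrightarrow> y \<noteq> 0 \<Longrightarrow> 1 \<le> \<bar>y\<bar>"
  by (metis Ints_cases of_int_0 of_int_abs of_int_le_iff zero_less_abs_iff int_one_le_iff_zero_less of_int_1)

lemma exp_i_cis: "exp (\<i> * complex_of_real t) = cis t"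
  by (simp add: cis_conv_exp)

lemma cube_exp_zero:
  fixes m :: "real^'n"
  assumes mi: "m$i \<in> \<int>" "m$i \<noteq> 0"
  shows "integral (cbox (\<chi> j. - pi) (\<chi> j. pi)) (Em m) = 0"
proof -
  define s where "s = pi / \<bar>m$i\<bar>"
  have m1: "1 \<le> \<bar>m$i\<bar>" using int_abs_ge1 mi by blast
  have s0: "0 \<le> s" unfolding s_def by simp
  have s1: "s \<le> 2 * pi" unfolding s_def using m1 by (simp add: field_simps)
  have per: "Em m (x + (2 * pi) *\<^sub>R axis i 1) = Em m x" for x
  proof -
    have "exp (- \<i> * complex_of_real (m \<bullet> ((2 * pi) *\<^sub>R axis i 1))) = cis (2 * pi * (- m$i))"
      using exp_i_cis[of "- (2 * pi * m$i)"] by (simp add: inner_axis algebra_simps)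
    also have "\<dots> = 1" using mi(1) by (intro cis_multiple_2pi) auto
    finally show ?thesis using Em_shift[of m x] by simp
  qed
  have "integral (cbox (\<chi> j. - pi) (\<chi> j. pi)) (\<lambda>x. Em m (x + s *\<^sub>R axis i 1))
      = integral (cbox (\<chi> j. - pi) (\<chi> j. pi)) (Em m)"
    by (rule periodic_shift[OF Em_cont per s0 s1])
  moreover have "(\<lambda>x. Em m (x + s *\<^sub>R axis i 1)) = (\<lambda>x. Em m x * (-1))"
  proof
    fix x
    have "exp (- \<i> * complex_of_real (m \<bullet> (s *\<^sub>R axis i 1))) = cis (- ((pi / \<bar>m$i\<bar>) * m$i))"
      using exp_i_cis[of "- ((pi / \<bar>m$i\<bar>) * m$i)"] unfolding s_def by (simp add: inner_axis algebra_simps)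
    also have "\<dots> = -1" using cis_pm_pi[OF mi(2)] cis_inverse[of "(pi / \<bar>m$i\<bar>) * m$i"] by simp
    finally show "Em m (x + s *\<^sub>R axis i 1) = Em m x * (-1)" using Em_shift[of m x] by simp
  qed
  ultimately have "- integral (cbox (\<chi> j. - pi) (\<chi> j. pi)) (Em m) = integral (cbox (\<chi> j. - pi) (\<chi> j. pi)) (Em m)"
    by simp
  then show ?thesis by simp
qed

context phis
begin

lemma phi1_cont: "continuous_on {0..} phi1"
proof -
  have "continuous_on {0..} (D 0)"
    by (rule DERIV_continuous_on[where D="D 1"]) (use Dd in auto)
  then show ?thesis using D0 by simp
qed

lemma q_cont: "continuous_on UNIV (\<lambda>x::real^'n. phi1 (norm x))"
  by (rule continuous_on_compose2[OF phi1_cont]) (auto intro: continuous_intros)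

lemma q_supp: "supp_box pi (\<lambda>x::real^'n. phi1 (norm x))"
  unfolding supp_box_def
proof (intro allI impI)
  fix x :: "real^'n"
  assume "x \<notin> cbox (\<chi> j. - pi) (\<chi> j. pi)"
  then obtain j where "\<not> (- pi \<le> x$j \<and> x$j \<le> pi)" unfolding mem_box_cart by auto
  then have "pi < \<bar>x$j\<bar>" by auto
  then have "aa < norm x" using component_le_norm_cart[of x j] ab by linarith
  then show "phi1 (norm x) = 0" by (rule phi1_zero)
qed

lemma T_decay: "\<exists>K. \<forall>(m::real^'n) i. m$i \<in> \<int> \<longrightarrow> m$i \<noteq> 0 \<longrightarrow>
   cmod (integral UNIV (\<lambda>x. of_real (phi1 (norm x)) * Em m x)) \<le> K / \<bar>m$i\<bar> ^ l"
proof -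
  obtain Bg where Bg: "\<And>(x::real^'n) i h. 0 \<le> h \<Longrightarrow>
      \<bar>fdiff h l (\<lambda>u. phi1 (norm (x + u *\<^sub>R axis i 1))) 0\<bar> \<le> h^l * Bg"
    using gd_bound[where 'n='n] by blast
  have "\<bar>fdiff 1 l (\<lambda>u. phi1 (norm ((0::real^'n) + u *\<^sub>R axis undefined 1))) 0\<bar> \<le> Bg"
    using Bg[of 1 0 undefined] by simp
  then have Bg0: "0 \<le> Bg" by (meson abs_ge_zero order_trans)
  define K0 where "K0 = pi + real l * pi"
  define Cn where "Cn = Henstock_Kurzweil_Integration.content (cbox (\<chi> j. - K0) ((\<chi> j. K0) :: real^'n))"
  have Cn0: "0 \<le> Cn" unfolding Cn_def by simp
  let ?q = "\<lambda>x::real^'n. phi1 (norm x)"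
  have "cmod (integral UNIV (\<lambda>x. of_real (?q x) * Em m x)) \<le> ((pi/2)^l * Bg * Cn) / \<bar>m$i\<bar> ^ l"
    if mi: "m$i \<in> \<int>" "m$i \<noteq> 0" for m :: "real^'n" and i
  proof -
    define h where "h = pi / \<bar>m$i\<bar>"
    have m1: "1 \<le> \<bar>m$i\<bar>" using int_abs_ge1 mi by blast
    have h0: "0 \<le> h" unfolding h_def by simp
    have hpi: "h \<le> pi" unfolding h_def using m1 by (simp add: field_simps)
    let ?A = "vdiff (h *\<^sub>R axis i 1) l ?q"
    have fac: "exp (\<i> * complex_of_real (h * m$i)) - 1 = -2"
      unfolding exp_i_cis h_def using cis_pm_pi[OF mi(2)] by simp
    have TA: "integral UNIV (\<lambda>x. of_real (?A x) * Em m x) = (-2) ^ l * integral UNIV (\<lambda>x. of_real (?q x) * Em m x)"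
      using vdiff_T[OF q_cont q_supp h0, of i l m, unfolded fac] .
    have cA: "continuous_on UNIV ?A" by (rule vdiff_cont[OF q_cont])
    have sA: "supp_box K0 ?A"
    proof (rule supp_box_mono[OF vdiff_supp[OF q_supp h0]])
      show "pi + real l * h \<le> K0" unfolding K0_def using hpi by (simp add: mult_left_mono)
    qed
    have hA: "((\<lambda>x. of_real (?A x) * Em m x) has_integral integral UNIV (\<lambda>x. of_real (?A x) * Em m x)) (cbox (\<chi> j. - K0) (\<chi> j. K0))"
    proof -
      have "continuous_on UNIV (\<lambda>x. of_real (?A x) * Em m x)"
        using cA Em_cont by (intro continuous_intros) auto
      then have "((\<lambda>x. of_real (?A x) * Em m x) has_integral integral (cbox (\<chi> j. - K0) (\<chi> j. K0)) (\<lambda>x. of_real (?A x) * Em m x)) (cbox (\<chi> j. - K0) (\<chi> j. K0))"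
        by (intro integrable_integral integrable_continuous) (auto intro: continuous_on_subset)
      moreover have "integral UNIV (\<lambda>x. of_real (?A x) * Em m x) = integral (cbox (\<chi> j. - K0) (\<chi> j. K0)) (\<lambda>x. of_real (?A x) * Em m x)"
        using int_UNIV[OF cA sA] by (rule integral_unique)
      ultimately show ?thesis by simp
    qed
    have bnd: "norm (of_real (?A x) * Em m x) \<le> h^l * Bg" for x
    proof -
      have "norm (of_real (?A x) * Em m x) = \<bar>?A x\<bar>" by (simp add: norm_mult)
      also have "\<dots> = \<bar>fdiff h l (\<lambda>u. phi1 (norm (x + u *\<^sub>R axis i 1))) 0\<bar>" by (simp add: vdiff_fdiff)
      also have "\<dots> \<le> h^l * Bg" by (rule Bg[OF h0])
      finally show ?thesis .
    qed
    have "cmod (integral UNIV (\<lambda>x. of_real (?A x) * Em m x)) \<le> h^l * Bg * Cn"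
      unfolding Cn_def by (rule has_integral_bound[OF _ hA bnd]) (use h0 Bg0 in simp)
    then have "2^l * cmod (integral UNIV (\<lambda>x. of_real (?q x) * Em m x)) \<le> h^l * Bg * Cn"
      unfolding TA by (simp add: norm_mult norm_power)
    then have "cmod (integral UNIV (\<lambda>x. of_real (?q x) * Em m x)) \<le> h^l * Bg * Cn / 2^l"
      by (simp add: field_simps)
    also have "h^l * Bg * Cn / 2^l = ((pi/2)^l * Bg * Cn) / \<bar>m$i\<bar> ^ l"
      unfolding h_def by (simp add: field_simps power_divide)
    finally show ?thesis .
  qed
  then show ?thesis by blast
qed

lemma psi_eq:
  fixes m :: "real^'n"
  assumes "m \<in> lattice" "m \<noteq> 0"
  shows "psi_coeff phi1 m = - (1 / (2 * pi) ^ CARD('n)) * integral UNIV (\<lambda>x. of_real (phi1 (norm x)) * Em m x)"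
proof -
  obtain i where mi: "m$i \<noteq> 0" using assms(2) by (auto simp: vec_eq_iff)
  have mZ: "m$i \<in> \<int>" using assms(1) unfolding lattice_def by auto
  let ?C = "cbox (\<chi> j. - pi) ((\<chi> j. pi) :: real^'n)"
  have i1: "Em m integrable_on ?C" by (rule integrable_continuous) (auto intro: continuous_on_subset Em_cont)
  have i2: "(\<lambda>x. of_real (phi1 (norm x)) * Em m x) integrable_on ?C"
    by (rule integrable_continuous) (auto intro!: continuous_intros continuous_on_subset[OF q_cont] continuous_on_subset[OF Em_cont])
  have "integral ?C (\<lambda>x::real^'n. complex_of_real (1 - phi1 (norm x)) * exp (- \<i> * complex_of_real (m \<bullet> x)))
      = integral ?C (\<lambda>x. Em m x - of_real (phi1 (norm x)) * Em m x)"
    by (simp add: Em_def algebra_simps)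
  also have "\<dots> = integral ?C (Em m) - integral ?C (\<lambda>x. of_real (phi1 (norm x)) * Em m x)"
    by (rule integral_diff[OF i1 i2])
  also have "integral ?C (Em m) = 0" by (rule cube_exp_zero[OF mZ mi])
  also have "integral ?C (\<lambda>x. of_real (phi1 (norm x)) * Em m x) = integral UNIV (\<lambda>x. of_real (phi1 (norm x)) * Em m x)"
    using int_UNIV[OF q_cont q_supp, of m] by (simp add: integral_unique)
  finally show ?thesis unfolding psi_coeff_def by simp
qed

lemma psi_bound0:
  "cmod (psi_coeff phi1 (m::real^'n)) \<le> Henstock_Kurzweil_Integration.content (cbox (\<chi> j. - pi) ((\<chi> j. pi) :: real^'n)) / (2 * pi) ^ CARD('n)"
proof -
  let ?C = "cbox (\<chi> j. - pi) ((\<chi> j. pi) :: real^'n)"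
  let ?f = "\<lambda>x::real^'n. complex_of_real (1 - phi1 (norm x)) * exp (- \<i> * complex_of_real (m \<bullet> x))"
  have "continuous_on UNIV ?f" by (intro continuous_intros q_cont)
  then have hi: "(?f has_integral integral ?C ?f) ?C"
    by (intro integrable_integral integrable_continuous) (auto intro: continuous_on_subset)
  have "norm (?f x) \<le> 1" for x
  proof -
    have e: "exp (- \<i> * complex_of_real (m \<bullet> x)) = exp (\<i> * complex_of_real (- (m \<bullet> x)))" by simp
    have "norm (?f x) = \<bar>1 - phi1 (norm x)\<bar>" by (simp only: norm_mult e norm_of_real norm_exp_i_times) simp
    then show ?thesis using phi1_range[of "norm x"] by simp
  qed
  then have "cmod (integral ?C ?f) \<le> 1 * Henstock_Kurzweil_Integration.content ?C" by (intro has_integral_bound[OF _ hi]) auto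
  then show ?thesis unfolding psi_coeff_def by (auto simp: norm_mult norm_divide norm_power intro!: divide_right_mono)
qed

end


definition mx :: "real^'n \<Rightarrow> real" where "mx m = Max (range (\<lambda>j. \<bar>m$j\<bar>))"

lemma mx_ge: "\<bar>m$j\<bar> \<le> mx m"
  unfolding mx_def by (rule Max_ge) auto

lemma mx_in: "\<exists>i. mx m = \<bar>m$i\<bar>"
proof -
  have "mx m \<in> range (\<lambda>j. \<bar>m$j\<bar>)" unfolding mx_def by (rule Max_in) auto
  then show ?thesis by auto
qed

lemma mx_nonneg: "0 \<le> mx m"
  using mx_ge[of m undefined] by linarith

lemma norm_le_mx: "norm (m::real^'n) \<le> real CARD('n) * mx m"
proof -
  have "norm m \<le> (\<Sum>i\<in>UNIV. \<bar>m$i\<bar>)" by (rule norm_le_l1_cart)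
  also have "\<dots> \<le> (\<Sum>i\<in>(UNIV::'n set). mx m)" by (intro sum_mono mx_ge)
  finally show ?thesis by simp
qed

lemma prod_le_mx: "(\<Prod>j\<in>UNIV. 1 + \<bar>(m::real^'n)$j\<bar>) \<le> (1 + mx m) ^ CARD('n)"
proof -
  have "(\<Prod>j\<in>UNIV. 1 + \<bar>m$j\<bar>) \<le> (\<Prod>j\<in>(UNIV::'n set). 1 + mx m)"
    by (intro prod_mono) (auto intro: mx_ge)
  then show ?thesis by simp
qed

lemma w_sum: "(\<Sum>z\<in>{- int Q..int Q}. 1 / (1 + \<bar>real_of_int z\<bar>)^2) \<le> 3 - 2 / (real Q + 1)"
proof (induction Q)
  case 0 then show ?case by simp
next
  case (Suc Q)
  have set: "{- int (Suc Q)..int (Suc Q)} = insert (- int (Suc Q)) (insert (int (Suc Q)) {- int Q..int Q})"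
    by auto
  have "(\<Sum>z\<in>{- int (Suc Q)..int (Suc Q)}. 1 / (1 + \<bar>real_of_int z\<bar>)^2)
      = 2 / (real Q + 2)^2 + (\<Sum>z\<in>{- int Q..int Q}. 1 / (1 + \<bar>real_of_int z\<bar>)^2)"
    unfolding set by (simp add: add_ac)
  also have "\<dots> \<le> 2 / (real Q + 2)^2 + (3 - 2 / (real Q + 1))" using Suc by simp
  also have "\<dots> \<le> 3 - 2 / (real (Suc Q) + 1)"
  proof -
    have a: "2 / (real Q + 2)^2 \<le> 2 / ((real Q + 1) * (real Q + 2))"
      by (intro divide_left_mono) (auto simp: power2_eq_square intro!: mult_right_mono)
    have b: "2 / (real Q + 1) - 2 / (real Q + 2) = 2 / ((real Q + 1) * (real Q + 2))"
      by (simp add: field_simps)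
    have e: "real (Suc Q) + 1 = real Q + 2" by simp
    show ?thesis unfolding e using a b by linarith
  qed
  finally show ?case .
qed

lemma w_sum3: "(\<Sum>z\<in>{- int Q..int Q}. 1 / (1 + \<bar>real_of_int z\<bar>)^2) \<le> 3"
  using w_sum[of Q] by (smt (verit) divide_nonneg_nonneg of_nat_0_le_iff)

lemma lat_floor: "x \<in> \<int> \<Longrightarrow> real_of_int \<lfloor>x\<rfloor> = x"
  by (metis Ints_cases floor_of_int)

lemma lattice_count:
  fixes A :: "(real^'n) set"
  assumes A: "A \<subseteq> lattice" "\<And>m j. m \<in> A \<Longrightarrow> \<bar>m$j\<bar> \<le> real Q"
  shows "finite A \<and> (\<Sum>m\<in>A. \<Prod>j\<in>UNIV. 1 / (1 + \<bar>m$j\<bar>)^2) \<le> 3 ^ CARD('n)"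
proof -
  define fl where "fl m = (\<lambda>j. \<lfloor>(m::real^'n)$j\<rfloor>)" for m
  define P where "P = PiE (UNIV::'n set) (\<lambda>_. {- int Q..int Q})"
  have inj: "inj_on fl A"
  proof (rule inj_onI)
    fix x y assume xy: "x \<in> A" "y \<in> A" "fl x = fl y"
    show "x = y"
    proof (rule vec_eq_iff[THEN iffD2], rule allI)
      fix j
      have "\<lfloor>x$j\<rfloor> = \<lfloor>y$j\<rfloor>" using xy(3) unfolding fl_def by meson
      moreover have "x$j \<in> \<int>" "y$j \<in> \<int>" using xy(1,2) A(1) unfolding lattice_def by auto
      ultimately show "x$j = y$j" using lat_floor by metis
    qed
  qed
  have sub: "fl ` A \<subseteq> P"
  proof
    fix f assume "f \<in> fl ` A"
    then obtain m where m: "m \<in> A" "f = fl m" by auto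
    have "f j \<in> {- int Q..int Q}" for j
    proof -
      have "m$j \<in> \<int>" using m(1) A(1) unfolding lattice_def by auto
      then have "real_of_int (f j) = m$j" using m(2) lat_floor unfolding fl_def by simp
      moreover have "\<bar>m$j\<bar> \<le> real Q" by (rule A(2)[OF m(1)])
      ultimately have "\<bar>real_of_int (f j)\<bar> \<le> real Q" by simp
      then show ?thesis by auto
    qed
    then show "f \<in> P" unfolding P_def by (auto simp: PiE_UNIV_domain)
  qed
  have finP: "finite P" unfolding P_def by (intro finite_PiE) auto
  have finA: "finite A" using finite_subset[OF sub finP] inj by (simp add: finite_image_iff)
  define w where "w z = 1 / (1 + \<bar>real_of_int z\<bar>)^2" for z :: int
  have w0: "0 \<le> w z" for z unfolding w_def by simp
  have "(\<Sum>m\<in>A. \<Prod>j\<in>UNIV. 1 / (1 + \<bar>m$j\<bar>)^2) = (\<Sum>m\<in>A. \<Prod>j\<in>UNIV. w (fl m j))"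
  proof (intro sum.cong prod.cong refl)
    fix m j assume "m \<in> A"
    then have "m$j \<in> \<int>" using A(1) unfolding lattice_def by auto
    then show "1 / (1 + \<bar>m$j\<bar>)^2 = w (fl m j)" unfolding w_def fl_def using lat_floor by simp
  qed
  also have "\<dots> = (\<Sum>f\<in>fl ` A. \<Prod>j\<in>UNIV. w (f j))"
    using sum.reindex[OF inj, of "\<lambda>f. \<Prod>j\<in>UNIV. w (f j)"] by simp
  also have "\<dots> \<le> (\<Sum>f\<in>P. \<Prod>j\<in>UNIV. w (f j))"
    by (rule sum_mono2[OF finP sub]) (auto intro: prod_nonneg w0)
  also have "\<dots> = (\<Prod>j\<in>(UNIV::'n set). \<Sum>z\<in>{- int Q..int Q}. w z)"
    unfolding P_def by (rule prod_sum_PiE[symmetric]) auto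
  also have "\<dots> \<le> (\<Prod>j\<in>(UNIV::'n set). 3)"
    by (intro prod_mono) (auto intro: sum_nonneg w0 simp: w_def w_sum3)
  finally show ?thesis using finA by simp
qed

lemma sum_sq_le:
  fixes f :: "'a \<Rightarrow> real"
  assumes "finite J" "\<And>j. j \<in> J \<Longrightarrow> 0 \<le> f j"
  shows "(\<Sum>j\<in>J. (f j)^2) \<le> (\<Sum>j\<in>J. f j)^2"
proof -
  have "(\<Sum>j\<in>J. (f j)^2) \<le> (\<Sum>j\<in>J. f j * (\<Sum>i\<in>J. f i))"
  proof (intro sum_mono)
    fix j assume "j \<in> J"
    then have "f j \<le> (\<Sum>i\<in>J. f i)" using assms by (intro member_le_sum) auto
    then show "(f j)^2 \<le> f j * (\<Sum>i\<in>J. f i)" using assms \<open>j \<in> J\<close>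
      by (simp add: power2_eq_square mult_left_mono)
  qed
  also have "\<dots> = (\<Sum>j\<in>J. f j)^2" by (simp add: sum_distrib_right power2_eq_square)
  finally show ?thesis .
qed


context phis
begin

lemma psi_decay_all: "\<exists>A. 0 \<le> A \<and> (\<forall>m::real^'n. m \<in> lattice \<longrightarrow> cmod (psi_coeff phi1 m) \<le> A / (1 + mx m)^L)"
proof -
  obtain K where K: "\<And>(m::real^'n) i. m$i \<in> \<int> \<Longrightarrow> m$i \<noteq> 0 \<Longrightarrow>
      cmod (integral UNIV (\<lambda>x. of_real (phi1 (norm x)) * Em m x)) \<le> K / \<bar>m$i\<bar> ^ L"
    using T_decay[where l=L and 'n='n] by blast
  define c :: real where "c = 1 / (2 * pi) ^ CARD('n)"
  define P0 where "P0 = Henstock_Kurzweil_Integration.content (cbox (\<chi> j. - pi) ((\<chi> j. pi) :: real^'n)) / (2 * pi) ^ CARD('n)"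
  define A where "A = max P0 (2^L * c * max K 0)"
  have c0: "0 < c" unfolding c_def by simp
  have P0: "0 \<le> P0" unfolding P0_def by simp
  have A0: "0 \<le> A" unfolding A_def using P0 by simp
  have "cmod (psi_coeff phi1 m) \<le> A / (1 + mx m)^L" if m: "m \<in> lattice" for m :: "real^'n"
  proof (cases "m = 0")
    case True
    have "mx m = 0" unfolding mx_def True by simp
    then show ?thesis using psi_bound0[of m] unfolding A_def P0_def by simp
  next
    case False
    obtain i where i: "mx m = \<bar>m$i\<bar>" using mx_in by blast
    obtain j where j: "m$j \<noteq> 0" using False by (auto simp: vec_eq_iff)
    have "0 < \<bar>m$j\<bar>" using j by simp
    then have mi: "m$i \<noteq> 0" using mx_ge[of m j] i by auto
    have mZ: "m$i \<in> \<int>" using m unfolding lattice_def by auto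
    have m1: "1 \<le> \<bar>m$i\<bar>" using int_abs_ge1[OF mZ mi] .
    have "cmod (psi_coeff phi1 m) = c * cmod (integral UNIV (\<lambda>x. of_real (phi1 (norm x)) * Em m x))"
      unfolding psi_eq[OF m False] c_def norm_mult norm_of_real by simp
    also have "\<dots> \<le> c * (max K 0 / \<bar>m$i\<bar> ^ L)"
    proof -
      have "K / \<bar>m$i\<bar> ^ L \<le> max K 0 / \<bar>m$i\<bar> ^ L" by (intro divide_right_mono) auto
      then have "cmod (integral UNIV (\<lambda>x. of_real (phi1 (norm x)) * Em m x)) \<le> max K 0 / \<bar>m$i\<bar> ^ L"
        using K[OF mZ mi] by linarith
      then show ?thesis using c0 by (intro mult_left_mono) auto
    qed
    also have "\<dots> \<le> c * (max K 0 * 2^L / (1 + \<bar>m$i\<bar>) ^ L)"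
    proof -
      have "(1 + \<bar>m$i\<bar>) ^ L \<le> (2 * \<bar>m$i\<bar>) ^ L" using m1 by (intro power_mono) auto
      then have "1 / \<bar>m$i\<bar> ^ L \<le> 2^L / (1 + \<bar>m$i\<bar>) ^ L"
        using m1 by (simp add: field_simps power_mult_distrib)
      then have "max K 0 * (1 / \<bar>m$i\<bar> ^ L) \<le> max K 0 * (2^L / (1 + \<bar>m$i\<bar>) ^ L)"
        by (intro mult_left_mono) auto
      then show ?thesis using c0 by (intro mult_left_mono) auto
    qed
    also have "\<dots> \<le> A / (1 + mx m)^L"
    proof -
      have "c * (max K 0 * 2^L / (1 + \<bar>m$i\<bar>) ^ L) = (2^L * c * max K 0) / (1 + \<bar>m$i\<bar>) ^ L"
        by simp
      also have "\<dots> \<le> A / (1 + \<bar>m$i\<bar>) ^ L" unfolding A_def by (intro divide_right_mono) auto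
      finally show ?thesis unfolding i .
    qed
    finally show ?thesis .
  qed
  then show ?thesis using A0 by blast
qed

end

theorem lemma2:
  fixes phi1 :: "real \<Rightarrow> real" and r R :: real
  assumes N2: "CARD('n::finite) \<ge> 2"
    and rR: "0 < r" "r < R" "R \<le> pi"
    and smooth: "smooth_on_nonneg phi1"
    and lower: "\<And>t. 0 \<le> t \<Longrightarrow> chi ((R - r) / 3) t \<le> phi1 t"
    and upper: "\<And>t. 0 \<le> t \<Longrightarrow> phi1 t \<le> chi (2 * (R - r) / 3) t"
  shows "\<forall>l::nat. \<exists>C::real. \<forall>(k::nat) (n::real^'n). n \<in> lattice \<longrightarrow>
           (\<Sum>j \<in> {j::nat. real k \<le> sqrt (real j) \<and> sqrt (real j) < real k + 1}.
              (cmod (Theta_coeff phi1 j n :: complex))\<^sup>2)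
           \<le> C / (1 + \<bar>norm n - real k\<bar>) ^ l"
proof -
  obtain D where D0: "D 0 = phi1"
    and Dd: "\<And>k x. 0 \<le> x \<Longrightarrow> (D k has_real_derivative D (Suc k) x) (at x within {0..})"
    using smooth unfolding smooth_on_nonneg_def by blast
  interpret P: phis phi1 r R D
    by (unfold_locales) (use rR D0 Dd lower upper in auto)
  show ?thesis
  proof
    fix l :: nat
    define N where "N = CARD('n)"
    obtain A where A0: "0 \<le> A"
      and Ab: "\<And>m::real^'n. m \<in> lattice \<Longrightarrow> cmod (psi_coeff phi1 m) \<le> A / (1 + mx m)^(l + 2*N)"
      using P.psi_decay_all[where L="l + 2*N" and 'n='n] by blast
    define c :: real where "c = 1 / (2*pi)^N"
    have c0: "0 < c" unfolding c_def by simp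
    define C0 where "C0 = c * A * (real N + 2)^l * 3^N"
    show "\<exists>C::real. \<forall>(k::nat) (n::real^'n). n \<in> lattice \<longrightarrow>
           (\<Sum>j \<in> {j::nat. real k \<le> sqrt (real j) \<and> sqrt (real j) < real k + 1}.
              (cmod (Theta_coeff phi1 j n :: complex))\<^sup>2)
           \<le> C / (1 + \<bar>norm n - real k\<bar>) ^ l"
    proof (intro exI[of _ "C0^2"] allI impI)
      fix k :: nat and n :: "real^'n" assume n: "n \<in> lattice"
      define d where "d = \<bar>norm n - real k\<bar>"
      have d0: "0 \<le> d" unfolding d_def by simp
      define J where "J = {j::nat. real k \<le> sqrt (real j) \<and> sqrt (real j) < real k + 1}"
      define S where "S j = {m \<in> lattice. (norm (n - m))^2 = real j}" for j :: nat
      define Q where "Q = nat \<lceil>norm n + real k + 1\<rceil>"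
      define W where "W m = (\<Prod>j\<in>UNIV. 1 / (1 + \<bar>(m::real^'n)$j\<bar>)^2)" for m
      define a where "a = A * (real N + 2)^l / (1 + d)^l"
      have a0: "0 \<le> a" unfolding a_def using A0 d0 by simp
      have finJ: "finite J"
      proof (rule finite_subset[of _ "{..<(k+1)^2}"])
        show "J \<subseteq> {..<(k+1)^2}"
        proof
          fix j assume "j \<in> J"
          then have sj: "sqrt (real j) < real k + 1" unfolding J_def by simp
          have "(sqrt (real j))^2 < (real k + 1)^2" by (rule power_strict_mono[OF sj]) auto
          then have "real j < real ((k+1)^2)" by (simp add: add.commute)
          then show "j \<in> {..<(k+1)^2}" by (simp only: of_nat_less_iff lessThan_iff)
        qed
      qed simp
      have mb: "real k \<le> norm (n - m) \<and> norm (n - m) < real k + 1" if "j \<in> J" "m \<in> S j" for j m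
      proof -
        have "(norm (n - m))^2 = real j" using that(2) unfolding S_def by simp
        then have "norm (n - m) = sqrt (real j)" by (metis norm_ge_zero real_sqrt_abs abs_of_nonneg)
        then show ?thesis using that(1) unfolding J_def by simp
      qed
      have Sl: "S j \<subseteq> lattice" for j unfolding S_def by auto
      have Qb: "\<bar>m$i\<bar> \<le> real Q" if "j \<in> J" "m \<in> S j" for j m i
      proof -
        have "norm m = norm (n - (n - m))" by simp
        also have "\<dots> \<le> norm n + norm (n - m)" by (rule norm_triangle_ineq4)
        finally have "norm m \<le> norm n + norm (n - m)" .
        moreover have "norm n + real k + 1 \<le> real Q" unfolding Q_def by (rule real_nat_ceiling_ge)
        ultimately show ?thesis using component_le_norm_cart[of m i] mb[OF that] by linarith
      qed
      have dm: "1 + d \<le> (real N + 2) * (1 + mx m)" if "j \<in> J" "m \<in> S j" for j m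
      proof -
        have t1: "norm n \<le> norm m + norm (n - m)" using norm_triangle_sub[of n m] by (simp add: add_ac)
        have t2: "norm (n - m) \<le> norm n + norm m" by (rule norm_triangle_ineq4)
        have "d \<le> norm m + 1" unfolding d_def using t1 t2 mb[OF that] by linarith
        moreover have "norm m \<le> real N * mx m" unfolding N_def by (rule norm_le_mx)
        moreover have "(real N + 2) * (1 + mx m) = real N + 2 + real N * mx m + 2 * mx m" by (simp add: algebra_simps)
        moreover have "0 \<le> mx m" by (rule mx_nonneg)
        ultimately show ?thesis by linarith
      qed
      have psim: "cmod (psi_coeff phi1 m) \<le> a * W m" if "j \<in> J" "m \<in> S j" for j m
      proof -
        have mL: "m \<in> lattice" using Sl that(2) by auto
        define X where "X = (1 + mx m)^l"
        define Y where "Y = (1 + mx m)^(2*N)"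
        have mx0: "0 \<le> mx m" by (rule mx_nonneg)
        have X0: "0 < X" "0 < Y" unfolding X_def Y_def using mx0 by auto
        have XY: "(1 + mx m)^(l + 2*N) = X * Y" unfolding X_def Y_def by (simp add: power_add)
        have iX: "1 / X \<le> (real N + 2)^l / (1 + d)^l"
        proof -
          have "(1 + d)^l \<le> ((real N + 2) * (1 + mx m))^l" using dm[OF that] d0 by (intro power_mono) auto
          then have "(1 + d)^l \<le> (real N + 2)^l * X" unfolding X_def by (simp add: power_mult_distrib)
          then show ?thesis using X0 d0 by (simp add: field_simps)
        qed
        have iY: "1 / Y \<le> W m"
        proof -
          have "(\<Prod>j\<in>(UNIV::'n set). 1 / (1 + mx m)^2) \<le> W m"
            unfolding W_def
          proof (intro prod_mono conjI)
            fix j :: 'n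
            show "0 \<le> 1 / (1 + mx m)^2" using mx0 by simp
            have "(1 + \<bar>m$j\<bar>)^2 \<le> (1 + mx m)^2" using mx_ge[of m j] by (intro power_mono) auto
            then show "1 / (1 + mx m)^2 \<le> 1 / (1 + \<bar>m$j\<bar>)^2"
              using mx0 by (intro divide_left_mono) (auto intro!: mult_pos_pos simp: add_pos_nonneg)
          qed
          moreover have "(\<Prod>j\<in>(UNIV::'n set). 1 / (1 + mx m)^2) = 1 / Y"
            unfolding Y_def N_def by (simp add: power_mult power_one_over mult.commute[of 2] power_commutes flip: power_mult)
          ultimately show ?thesis by simp
        qed
        have "cmod (psi_coeff phi1 m) \<le> A / (X * Y)" using Ab[OF mL] XY by simp
        also have "\<dots> = A * (1 / X) * (1 / Y)" by simp
        also have "\<dots> \<le> A * ((real N + 2)^l / (1 + d)^l) * W m"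
          using iX iY A0 X0 d0 by (intro mult_mono) (auto simp: mult_nonneg_nonneg)
        finally show ?thesis unfolding a_def by simp
      qed
      define U where "U = (\<Union>j\<in>J. S j)"
      have cnt: "finite U \<and> (\<Sum>m\<in>U. W m) \<le> 3 ^ CARD('n)"
        unfolding W_def
        by (rule lattice_count[of U Q]) (use Sl Qb in \<open>auto simp: U_def\<close>)
      have finS: "finite (S j)" if "j \<in> J" for j
        using cnt that by (metis U_def UN_upper finite_subset)
      have disj: "\<forall>i\<in>J. \<forall>j\<in>J. i \<noteq> j \<longrightarrow> S i \<inter> S j = {}"
        unfolding S_def by auto
      have Th: "cmod (Theta_coeff phi1 j n) \<le> c * (\<Sum>m\<in>S j. cmod (psi_coeff phi1 m))" for j
      proof -
        have "cmod (Theta_coeff phi1 j n) = c * cmod (\<Sum>m\<in>S j. psi_coeff phi1 m)"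
          unfolding Theta_coeff_def S_def c_def N_def by (simp add: norm_mult norm_divide norm_power)
        also have "\<dots> \<le> c * (\<Sum>m\<in>S j. cmod (psi_coeff phi1 m))"
          using c0 by (intro mult_left_mono norm_sum) auto
        finally show ?thesis .
      qed
      have "(\<Sum>j\<in>J. cmod (Theta_coeff phi1 j n)) \<le> (\<Sum>j\<in>J. c * (\<Sum>m\<in>S j. cmod (psi_coeff phi1 m)))"
        by (intro sum_mono Th)
      also have "\<dots> = c * (\<Sum>m\<in>U. cmod (psi_coeff phi1 m))"
      proof -
        have UD: "(\<Sum>m\<in>U. cmod (psi_coeff phi1 m)) = (\<Sum>j\<in>J. \<Sum>m\<in>S j. cmod (psi_coeff phi1 m))"
          unfolding U_def by (rule sum.UNION_disjoint[OF finJ _ disj]) (use finS in auto)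
        show ?thesis unfolding UD sum_distrib_left ..
      qed
      also have "\<dots> \<le> c * (\<Sum>m\<in>U. a * W m)"
        using c0 by (intro mult_left_mono sum_mono) (auto simp: U_def intro: psim)
      also have "\<dots> = c * a * (\<Sum>m\<in>U. W m)" by (simp add: sum_distrib_left mult.assoc)
      also have "\<dots> \<le> c * a * 3 ^ CARD('n)" using cnt c0 a0 by (intro mult_left_mono) auto
      also have "\<dots> = C0 / (1 + d)^l" unfolding C0_def a_def N_def by simp
      finally have sumb: "(\<Sum>j\<in>J. cmod (Theta_coeff phi1 j n)) \<le> C0 / (1 + d)^l" .
      have "(\<Sum>j\<in>J. (cmod (Theta_coeff phi1 j n))^2) \<le> (\<Sum>j\<in>J. cmod (Theta_coeff phi1 j n))^2"
        by (rule sum_sq_le[OF finJ]) auto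
      also have "\<dots> \<le> (C0 / (1 + d)^l)^2"
        by (rule power_mono[OF sumb]) (auto intro: sum_nonneg)
      also have "\<dots> = C0^2 / ((1 + d)^l)^2" by (simp add: power_divide)
      also have "\<dots> \<le> C0^2 / (1 + d)^l"
      proof (rule divide_left_mono)
        have "1 \<le> (1 + d)^l" using d0 by simp
        then show "(1 + d)^l \<le> ((1 + d)^l)^2" by (simp add: power2_eq_square)
        show "0 \<le> C0^2" by simp
        show "0 < ((1 + d)^l)^2 * (1 + d)^l" using d0 by simp
      qed
      finally show "(\<Sum>j \<in> {j::nat. real k \<le> sqrt (real j) \<and> sqrt (real j) < real k + 1}.
              (cmod (Theta_coeff phi1 j n :: complex))\<^sup>2)
           \<le> C0^2 / (1 + \<bar>norm n - real k\<bar>) ^ l" unfolding J_def d_def .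
    qed
  qed
qed


end
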